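(* Every $2\times2$ minor of $X$ lies in the ideal $\mathcal{I}'+\big(\wedge^2(B_1|B_2),\ \mathrm{Tr}(A)+2\pi,\ \text{entries of } B_2J_{n-r}B_1^{t}-AJ_{l}\big)$ of $S$.
   Context: Let $p$ be an odd prime, $F/\mathbb{Q}_p$ a finite extension with uniformizer $\pi$, $\mathcal{O}$ the ring of integers of the completion $\breve F$ of the maximal unramified extension of $F$ ($\pi$ is a uniformizer of $\mathcal{O}$, $2\in\mathcal{O}^\times$). Let $n\ge3$ and $1\le r\le n-1$ be integers, $d=2n$, $l=2r$. Let $X=(x_{i,j})_{1\le i,j\le d}$ be a matrix of indeterminates and $S=\mathcal{O}[(x_{i,j})]$. Write $X$ in block form $X=\begin{pmatrix}E_1&O_1&E_2\\ B_1&A&B_2\\ E_3&O_2&E_4\end{pmatrix}$ with $E_c$ of size $(n-r)\times(n-r)$, $O_1,O_2$ of size $(n-r)\times l$, $B_1,B_2$ of size $l\times(n-r)$, $A$ of size $l\times l$. Let $Z=\{n-r+1,\dots,n+r\}$ and $Z^c=\{1,\dots,d\}\setminus Z$. Let $J_m$ be the $m\times m$ antidiagonal matrix with $1$'s on the antidiagonal. Let $\wedge^2(B_1|B_2)$ denote the set of elements $x_{i,j}x_{t,s}-x_{i,s}x_{t,j}$ with $i,t\in Z$, $j,s\in Z^c$. Let $\mathcal{I}'\subset S$ be the ideal generated by the entries of the six matrices $E_1+\tfrac12J_{n-r}B_2^tJ_lB_1$, $E_2+\tfrac12J_{n-r}B_2^tJ_lB_2$, $E_3+\tfrac12J_{n-r}B_1^tJ_lB_1$,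 $E_4+\tfrac12J_{n-r}B_1^tJ_lB_2$, $O_1+\tfrac12J_{n-r}B_2^tJ_lA$, $O_2+\tfrac12J_{n-r}B_1^tJ_lA$. *)

theory Defs
  imports Main "HOL-Library.Poly_Mapping"
begin

text \<open>Multivariate polynomials over a coefficient ring 'a in the indeterminates
  x_(i,j), represented as finitely supported maps from monomials (finitely supported
  exponent vectors on nat*nat) to coefficients.\<close>
type_synonym 'a mpoly = "((nat \<times> nat) \<Rightarrow>\<^sub>0 nat) \<Rightarrow>\<^sub>0 'a"

definition Var :: "nat \<Rightarrow> nat \<Rightarrow> 'a::comm_ring_1 mpoly" where
  "Var i j = Poly_Mapping.single (Poly_Mapping.single (i, j) 1) 1"

definition Const :: "'a::comm_ring_1 \<Rightarrow> 'a mpoly" where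
  "Const c = Poly_Mapping.single 0 c"

definition ideal_gen :: "'b::comm_ring_1 set \<Rightarrow> 'b set" where
  "ideal_gen G = {x. \<exists>F c. finite F \<and> F \<subseteq> G \<and> x = (\<Sum>g\<in>F. c g * g)}"

text \<open>Matrices as functions with 1-based indices.\<close>
type_synonym 'b matf = "nat \<Rightarrow> nat \<Rightarrow> 'b"

definition mmul :: "nat \<Rightarrow> 'b::comm_ring_1 matf \<Rightarrow> 'b matf \<Rightarrow> 'b matf" where
  "mmul k M N = (\<lambda>i j. \<Sum>t=1..k. M i t * N t j)"

definition mtrans :: "'b matf \<Rightarrow> 'b matf" where
  "mtrans M = (\<lambda>i j. M j i)"

definition antiJ :: "nat \<Rightarrow> 'b::comm_ring_1 matf" where
  "antiJ m = (\<lambda>i j. if i + j = m + 1 then 1 else 0)"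

definition madd :: "'b::comm_ring_1 matf \<Rightarrow> 'b matf \<Rightarrow> 'b matf" where
  "madd M N = (\<lambda>i j. M i j + N i j)"

definition msub :: "'b::comm_ring_1 matf \<Rightarrow> 'b matf \<Rightarrow> 'b matf" where
  "msub M N = (\<lambda>i j. M i j - N i j)"

definition msmul :: "'b::comm_ring_1 \<Rightarrow> 'b matf \<Rightarrow> 'b matf" where
  "msmul c M = (\<lambda>i j. c * M i j)"

definition block :: "'b matf \<Rightarrow> nat \<Rightarrow> nat \<Rightarrow> 'b matf" where
  "block M r0 c0 = (\<lambda>i j. M (r0 + i) (c0 + j))"

definition entries :: "'b matf \<Rightarrow> nat \<Rightarrow> nat \<Rightarrow> 'b set" where
  "entries M p q = {M i j | i j. 1 \<le> i \<and> i \<le> p \<and> 1 \<le> j \<and> j \<le> q}"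

definition mtrace :: "'b::comm_ring_1 matf \<Rightarrow> nat \<Rightarrow> 'b" where
  "mtrace M k = (\<Sum>i=1..k. M i i)"

definition Xmat :: "'a::comm_ring_1 mpoly matf" where
  "Xmat = (\<lambda>i j. Var i j)"

text \<open>The ideal I' for parameters n, r and h = 1/2 (so l = 2r, m = n - r).\<close>
definition Iprime_gens :: "nat \<Rightarrow> nat \<Rightarrow> 'a::comm_ring_1 \<Rightarrow> 'a mpoly set" where
  "Iprime_gens n r h = (let m = n - r; l = 2 * r; X = (Xmat :: 'a mpoly matf);
     E1 = block X 0 0; O1 = block X 0 m; E2 = block X 0 (m + l);
     B1 = block X m 0; A = block X m m; B2 = block X m (m + l);
     E3 = block X (m + l) 0; O2 = block X (m + l) m; E4 = block X (m + l) (m + l);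
     hh = Const h;
     P = (\<lambda>U V. msmul hh (mmul l (mmul m (antiJ m) (mtrans U)) (mmul l (antiJ l) V)))
   in entries (madd E1 (P B2 B1)) m m \<union> entries (madd E2 (P B2 B2)) m m
    \<union> entries (madd E3 (P B1 B1)) m m \<union> entries (madd E4 (P B1 B2)) m m
    \<union> entries (madd O1 (P B2 A)) m l \<union> entries (madd O2 (P B1 A)) m l)"

end

theory Submission
  imports Defs
begin


lemma ig_gen: "g \<in> G \<Longrightarrow> g \<in> ideal_gen G"
  unfolding ideal_gen_def by (rule CollectI, rule exI[of _ "{g}"], rule exI[of _ "\<lambda>_. 1"]) simp

lemma ig_zero: "0 \<in> ideal_gen G"
  unfolding ideal_gen_def by (auto intro!: exI[of _ "{}"])

lemma ig_add:
  assumes "x \<in> ideal_gen G" "y \<in> ideal_gen G"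
  shows "x + y \<in> ideal_gen G"
proof -
  obtain F1 c1 where 1: "finite F1" "F1 \<subseteq> G" "x = (\<Sum>g\<in>F1. c1 g * g)"
    using assms(1) unfolding ideal_gen_def by blast
  obtain F2 c2 where 2: "finite F2" "F2 \<subseteq> G" "y = (\<Sum>g\<in>F2. c2 g * g)"
    using assms(2) unfolding ideal_gen_def by blast
  have a: "x = (\<Sum>g\<in>F1\<union>F2. (if g \<in> F1 then c1 g else 0) * g)"
  proof -
    have "(\<Sum>g\<in>F1\<union>F2. (if g \<in> F1 then c1 g else 0) * g) = (\<Sum>g\<in>F1\<union>F2. if g \<in> F1 then c1 g * g else 0)"
      by (intro sum.cong) auto
    also have "\<dots> = (\<Sum>g\<in>(F1\<union>F2) \<inter> F1. c1 g * g)"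
      using 1 2 by (simp add: sum.inter_restrict[symmetric])
    also have "(F1\<union>F2) \<inter> F1 = F1" by blast
    finally show ?thesis using 1 by simp
  qed
  have b: "y = (\<Sum>g\<in>F1\<union>F2. (if g \<in> F2 then c2 g else 0) * g)"
  proof -
    have "(\<Sum>g\<in>F1\<union>F2. (if g \<in> F2 then c2 g else 0) * g) = (\<Sum>g\<in>F1\<union>F2. if g \<in> F2 then c2 g * g else 0)"
      by (intro sum.cong) auto
    also have "\<dots> = (\<Sum>g\<in>(F1\<union>F2) \<inter> F2. c2 g * g)"
      using 1 2 by (simp add: sum.inter_restrict[symmetric])
    also have "(F1\<union>F2) \<inter> F2 = F2" by blast
    finally show ?thesis using 2 by simp
  qed
  have "x + y = (\<Sum>g\<in>F1\<union>F2. ((if g \<in> F1 then c1 g else 0) + (if g \<in> F2 then c2 g else 0)) * g)"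
    unfolding a b by (simp add: distrib_right sum.distrib)
  then show ?thesis unfolding ideal_gen_def using 1 2
    by (intro CollectI exI[of _ "F1 \<union> F2"]) auto
qed

lemma ig_mult: "x \<in> ideal_gen G \<Longrightarrow> r * x \<in> ideal_gen G"
  unfolding ideal_gen_def
  apply clarify
  apply (rule exI, rule exI[of _ "\<lambda>g. r * _ g"])
  apply (auto simp: sum_distrib_left mult.assoc)
  done

lemma ig_uminus: "x \<in> ideal_gen G \<Longrightarrow> - x \<in> ideal_gen G"
  using ig_mult[of x G "-1"] by simp

lemma ig_diff: "x \<in> ideal_gen G \<Longrightarrow> y \<in> ideal_gen G \<Longrightarrow> x - y \<in> ideal_gen G"
  using ig_add[of x G "-y"] ig_uminus[of y G] by simp

lemma ig_sum: "finite A \<Longrightarrow> (\<And>a. a \<in> A \<Longrightarrow> f a \<in> ideal_gen G) \<Longrightarrow> sum f A \<in> ideal_gen G"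
  by (induction A rule: finite_induct) (auto intro: ig_add ig_zero)

lemma comb:
  fixes f :: "nat \<Rightarrow> nat \<Rightarrow> 'b::comm_ring_1"
  assumes fin: "finite T" "finite T'"
  and h1: "f i j - (\<Sum>t\<in>T. \<alpha> t * f (\<rho> t) j) \<in> ideal_gen G"
  and h2: "f i s - (\<Sum>t\<in>T. \<alpha> t * f (\<rho> t) s) \<in> ideal_gen G"
  and h3: "f i' j - (\<Sum>t\<in>T'. \<alpha>' t * f (\<rho>' t) j) \<in> ideal_gen G"
  and h4: "f i' s - (\<Sum>t\<in>T'. \<alpha>' t * f (\<rho>' t) s) \<in> ideal_gen G"
  and h5: "\<And>t t'. t \<in> T \<Longrightarrow> t' \<in> T' \<Longrightarrow> f (\<rho> t) j * f (\<rho>' t') s - f (\<rho> t) s * f (\<rho>' t') j \<in> ideal_gen G"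
  shows "f i j * f i' s - f i s * f i' j \<in> ideal_gen G"
proof -
  define X1 where "X1 = (\<Sum>t\<in>T. \<alpha> t * f (\<rho> t) j)"
  define Y1 where "Y1 = (\<Sum>t\<in>T. \<alpha> t * f (\<rho> t) s)"
  define X2 where "X2 = (\<Sum>t\<in>T'. \<alpha>' t * f (\<rho>' t) j)"
  define Y2 where "Y2 = (\<Sum>t\<in>T'. \<alpha>' t * f (\<rho>' t) s)"
  have key: "X1 * Y2 - Y1 * X2 = (\<Sum>t\<in>T. \<Sum>t'\<in>T'. (\<alpha> t * \<alpha>' t') * (f (\<rho> t) j * f (\<rho>' t') s - f (\<rho> t) s * f (\<rho>' t') j))"
  proof -
    have "X1 * Y2 - Y1 * X2 = (\<Sum>t\<in>T. \<Sum>t'\<in>T'. (\<alpha> t * f (\<rho> t) j) * (\<alpha>' t' * f (\<rho>' t') s))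
        - (\<Sum>t\<in>T. \<Sum>t'\<in>T'. (\<alpha> t * f (\<rho> t) s) * (\<alpha>' t' * f (\<rho>' t') j))"
      unfolding X1_def Y1_def X2_def Y2_def sum_product by simp
    also have "\<dots> = (\<Sum>t\<in>T. \<Sum>t'\<in>T'. (\<alpha> t * f (\<rho> t) j) * (\<alpha>' t' * f (\<rho>' t') s) - (\<alpha> t * f (\<rho> t) s) * (\<alpha>' t' * f (\<rho>' t') j))"
      by (simp add: sum_subtractf)
    also have "\<dots> = (\<Sum>t\<in>T. \<Sum>t'\<in>T'. (\<alpha> t * \<alpha>' t') * (f (\<rho> t) j * f (\<rho>' t') s - f (\<rho> t) s * f (\<rho>' t') j))"
      by (intro sum.cong refl) (simp add: algebra_simps)
    finally show ?thesis .
  qed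
  have k: "X1 * Y2 - Y1 * X2 \<in> ideal_gen G"
    unfolding key by (intro ig_sum ig_mult h5 fin)
  have "f i j * f i' s - f i s * f i' j = ((f i j - X1) * f i' s + X1 * (f i' s - Y2))
      - ((f i s - Y1) * f i' j + Y1 * (f i' j - X2)) + (X1 * Y2 - Y1 * X2)"
    by (simp add: algebra_simps)
  also have "\<dots> \<in> ideal_gen G"
    using h1 h2 h3 h4 k unfolding X1_def[symmetric] Y1_def[symmetric] X2_def[symmetric] Y2_def[symmetric]
  proof -
    have m1: "(f i j - X1) * f i' s \<in> ideal_gen G" using ig_mult[OF h1[folded X1_def], of "f i' s"] by (simp add: mult.commute)
    have m2: "X1 * (f i' s - Y2) \<in> ideal_gen G" using ig_mult[OF h4[folded Y2_def]] by simp
    have m3: "(f i s - Y1) * f i' j \<in> ideal_gen G" using ig_mult[OF h2[folded Y1_def], of "f i' j"] by (simp add: mult.commute)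
    have m4: "Y1 * (f i' j - X2) \<in> ideal_gen G" using ig_mult[OF h3[folded X2_def]] by simp
    show ?thesis by (intro ig_add[OF ig_diff[OF ig_add ig_add] k] m1 m2 m3 m4)
  qed
  finally show ?thesis .
qed

lemma mmul_J_left: assumes "1 \<le> t" "t \<le> l" shows "mmul l (antiJ l) V t b = V (l+1-t) b"
proof -
  have "mmul l (antiJ l) V t b = (\<Sum>t'\<in>{1..l}. if t' = l+1-t then V t' b else 0)"
    unfolding mmul_def antiJ_def using assms by (intro sum.cong) auto
  also have "\<dots> = V (l+1-t) b" using assms by (auto simp: sum.delta)
  finally show ?thesis .
qed

lemma mmul_J_right: assumes "1 \<le> b" "b \<le> l" shows "mmul l V (antiJ l) a b = V a (l+1-b)"
proof -
  have "mmul l V (antiJ l) a b = (\<Sum>t'\<in>{1..l}. if t' = l+1-b then V a t' else 0)"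
    unfolding mmul_def antiJ_def using assms by (intro sum.cong) auto
  also have "\<dots> = V a (l+1-b)" using assms by (auto simp: sum.delta)
  finally show ?thesis .
qed

lemma mmul_WJ: "mmul l W (mmul l (antiJ l) V) a j = (\<Sum>t=1..l. W a t * V (l+1-t) j)"
  apply (simp only: mmul_def[of l W])
  apply (rule sum.cong)
   apply simp
  apply (simp add: mmul_J_left)
  done

lemma mmul_JR: "mmul m (mmul m V (antiJ m)) W a b = (\<Sum>u=1..m. V a (m+1-u) * W u b)"
  apply (simp only: mmul_def[of m "mmul m V (antiJ m)"])
  apply (rule sum.cong)
   apply simp
  apply (simp add: mmul_J_right)
  done



lemma top_gen:
  fixes h :: "'a::comm_ring_1"
  assumes "1 \<le> a" "a \<le> n - r" "1 \<le> j" "j \<le> 2*n" "r \<le> n"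
  shows "Var a j + Const h * (\<Sum>t=1..2*r. mmul (n-r) (antiJ (n-r)) (mtrans (block (Xmat::'a mpoly matf) (n-r) (n-r+2*r))) a t * Var (n-r+(2*r+1-t)) j) \<in> Iprime_gens n r h"
proof -
  let ?W = "mmul (n-r) (antiJ (n-r)) (mtrans (block (Xmat::'a mpoly matf) (n-r) (n-r+2*r)))"
  let ?x = "Var a j + Const h * (\<Sum>t=1..2*r. ?W a t * Var (n-r+(2*r+1-t)) j)"
  consider (c1) "j \<le> n - r" | (c2) "n - r < j" "j \<le> n - r + 2*r" | (c3) "n - r + 2*r < j" by linarith
  then show ?thesis
  proof cases
    case c1
    have e: "?x = madd (block Xmat 0 0) (msmul (Const h) (mmul (2*r) ?W (mmul (2*r) (antiJ (2*r)) (block Xmat (n-r) 0)))) a j"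
      by (simp add: madd_def msmul_def mmul_WJ block_def Xmat_def)
    have "?x \<in> entries (madd (block Xmat 0 0) (msmul (Const h) (mmul (2*r) ?W (mmul (2*r) (antiJ (2*r)) (block Xmat (n-r) 0))))) (n-r) (n-r)"
      unfolding entries_def using e assms c1 by blast
    then show ?thesis unfolding Iprime_gens_def Let_def by blast
  next
    case c2
    have e: "?x = madd (block Xmat 0 (n-r)) (msmul (Const h) (mmul (2*r) ?W (mmul (2*r) (antiJ (2*r)) (block Xmat (n-r) (n-r))))) a (j - (n-r))"
      using c2 by (simp add: madd_def msmul_def mmul_WJ block_def Xmat_def)
    have "?x \<in> entries (madd (block Xmat 0 (n-r)) (msmul (Const h) (mmul (2*r) ?W (mmul (2*r) (antiJ (2*r)) (block Xmat (n-r) (n-r)))))) (n-r) (2*r)"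
      unfolding entries_def using e assms c2 by (intro CollectI exI[of _ a] exI[of _ "j - (n-r)"]) auto
    then show ?thesis unfolding Iprime_gens_def Let_def by blast
  next
    case c3
    have e: "?x = madd (block Xmat 0 (n-r+2*r)) (msmul (Const h) (mmul (2*r) ?W (mmul (2*r) (antiJ (2*r)) (block Xmat (n-r) (n-r+2*r))))) a (j - (n-r+2*r))"
      using c3 by (simp add: madd_def msmul_def mmul_WJ block_def Xmat_def)
    have "?x \<in> entries (madd (block Xmat 0 (n-r+2*r)) (msmul (Const h) (mmul (2*r) ?W (mmul (2*r) (antiJ (2*r)) (block Xmat (n-r) (n-r+2*r)))))) (n-r) (n-r)"
      unfolding entries_def using e assms c3 by (intro CollectI exI[of _ a] exI[of _ "j - (n-r+2*r)"]) auto
    then show ?thesis unfolding Iprime_gens_def Let_def by blast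
  qed
qed

lemma bot_gen:
  fixes h :: "'a::comm_ring_1"
  assumes "1 \<le> a" "a \<le> n - r" "1 \<le> j" "j \<le> 2*n" "r \<le> n"
  shows "Var (n-r+2*r+a) j + Const h * (\<Sum>t=1..2*r. mmul (n-r) (antiJ (n-r)) (mtrans (block (Xmat::'a mpoly matf) (n-r) 0)) a t * Var (n-r+(2*r+1-t)) j) \<in> Iprime_gens n r h"
proof -
  let ?W = "mmul (n-r) (antiJ (n-r)) (mtrans (block (Xmat::'a mpoly matf) (n-r) 0))"
  let ?x = "Var (n-r+2*r+a) j + Const h * (\<Sum>t=1..2*r. ?W a t * Var (n-r+(2*r+1-t)) j)"
  consider (c1) "j \<le> n - r" | (c2) "n - r < j" "j \<le> n - r + 2*r" | (c3) "n - r + 2*r < j" by linarith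
  then show ?thesis
  proof cases
    case c1
    have e: "?x = madd (block Xmat (n-r+2*r) 0) (msmul (Const h) (mmul (2*r) ?W (mmul (2*r) (antiJ (2*r)) (block Xmat (n-r) 0)))) a j"
      by (simp add: madd_def msmul_def mmul_WJ block_def Xmat_def)
    have "?x \<in> entries (madd (block Xmat (n-r+2*r) 0) (msmul (Const h) (mmul (2*r) ?W (mmul (2*r) (antiJ (2*r)) (block Xmat (n-r) 0))))) (n-r) (n-r)"
      unfolding entries_def using e assms c1 by blast
    then show ?thesis unfolding Iprime_gens_def Let_def by blast
  next
    case c2
    have e: "?x = madd (block Xmat (n-r+2*r) (n-r)) (msmul (Const h) (mmul (2*r) ?W (mmul (2*r) (antiJ (2*r)) (block Xmat (n-r) (n-r))))) a (j - (n-r))"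
      using c2 by (simp add: madd_def msmul_def mmul_WJ block_def Xmat_def)
    have "?x \<in> entries (madd (block Xmat (n-r+2*r) (n-r)) (msmul (Const h) (mmul (2*r) ?W (mmul (2*r) (antiJ (2*r)) (block Xmat (n-r) (n-r)))))) (n-r) (2*r)"
      unfolding entries_def using e assms c2 by (intro CollectI exI[of _ a] exI[of _ "j - (n-r)"]) auto
    then show ?thesis unfolding Iprime_gens_def Let_def by blast
  next
    case c3
    have e: "?x = madd (block Xmat (n-r+2*r) (n-r+2*r)) (msmul (Const h) (mmul (2*r) ?W (mmul (2*r) (antiJ (2*r)) (block Xmat (n-r) (n-r+2*r))))) a (j - (n-r+2*r))"
      using c3 by (simp add: madd_def msmul_def mmul_WJ block_def Xmat_def)
    have "?x \<in> entries (madd (block Xmat (n-r+2*r) (n-r+2*r)) (msmul (Const h) (mmul (2*r) ?W (mmul (2*r) (antiJ (2*r)) (block Xmat (n-r) (n-r+2*r)))))) (n-r) (n-r)"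
      unfolding entries_def using e assms c3 by (intro CollectI exI[of _ a] exI[of _ "j - (n-r+2*r)"]) auto
    then show ?thesis unfolding Iprime_gens_def Let_def by blast
  qed
qed

lemma A_gen:
  assumes "1 \<le> a" "a \<le> 2*r" "1 \<le> b" "b \<le> 2*r"
  shows "(\<Sum>u=1..n-r. Var (n-r+a) (n+r+(n-r+1-u)) * Var (n-r+b) u) - Var (n-r+a) (n-r+(2*r+1-b))
   \<in> entries (msub (mmul (n - r) (mmul (n - r) (block (Xmat::'a::comm_ring_1 mpoly matf) (n - r) (n + r)) (antiJ (n - r)))
                              (mtrans (block Xmat (n - r) 0)))
                        (mmul (2 * r) (block Xmat (n - r) (n - r)) (antiJ (2 * r))))
                 (2 * r) (2 * r)"
proof -
  have e: "(\<Sum>u=1..n-r. Var (n-r+a) (n+r+(n-r+1-u)) * Var (n-r+b) u) - Var (n-r+a) (n-r+(2*r+1-b))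
    = msub (mmul (n - r) (mmul (n - r) (block (Xmat::'a::comm_ring_1 mpoly matf) (n - r) (n + r)) (antiJ (n - r)))
                              (mtrans (block Xmat (n - r) 0)))
                        (mmul (2 * r) (block Xmat (n - r) (n - r)) (antiJ (2 * r))) a b"
    using assms by (simp add: msub_def mmul_JR mmul_J_right block_def Xmat_def mtrans_def)
  show ?thesis unfolding entries_def using e assms by blast
qed



lemma main_gen:
  fixes n r :: nat and h :: "'a::comm_ring_1" and G :: "'a mpoly set"
  assumes rn: "r \<le> n"
   and GI: "Iprime_gens n r h \<subseteq> G"
   and GW: "\<And>i' t' j' s'. i' \<in> {n - r + 1..n + r} \<Longrightarrow> t' \<in> {n - r + 1..n + r}
      \<Longrightarrow> j' \<in> {1..2 * n} - {n - r + 1..n + r} \<Longrightarrow> s' \<in> {1..2 * n} - {n - r + 1..n + r}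
      \<Longrightarrow> Var i' j' * Var t' s' - Var i' s' * Var t' j' \<in> G"
   and GA: "entries (msub (mmul (n - r) (mmul (n - r) (block (Xmat::'a mpoly matf) (n - r) (n + r)) (antiJ (n - r)))
                              (mtrans (block Xmat (n - r) 0)))
                        (mmul (2 * r) (block Xmat (n - r) (n - r)) (antiJ (2 * r))))
                 (2 * r) (2 * r) \<subseteq> G"
   and b: "1 \<le> i" "i \<le> 2 * n" "1 \<le> t" "t \<le> 2 * n"
     "1 \<le> j" "j \<le> 2 * n" "1 \<le> s" "s \<le> 2 * n"
  shows "Var i j * Var t s - Var i s * Var t j \<in> ideal_gen G"
proof -
  let ?Z = "{n - r + 1..n + r}"
  let ?Zc = "{1..2 * n} - {n - r + 1..n + r}"
  have col: "\<exists>(U::nat set) \<beta> \<sigma>. finite U \<and> (\<forall>u\<in>U. \<sigma> u \<in> ?Zc) \<and>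
     (\<forall>k\<in>?Z. (Var k j :: 'a mpoly) - (\<Sum>u\<in>U. \<beta> u * Var k (\<sigma> u)) \<in> ideal_gen G)"
    if j: "1 \<le> j" "j \<le> 2 * n" for j
  proof (cases "j \<in> ?Z")
    case True
    let ?b = "2*r+1-(j-(n-r))"
    show ?thesis
    proof (rule exI[where x="{1..n-r}"], rule exI[where x="\<lambda>u. (Var (n-r+?b) u :: 'a mpoly)"], rule exI[where x="\<lambda>u. n+r+(n-r+1-u)"], intro conjI ballI)
      show "finite {1..n-r}" by simp
      fix u assume "u \<in> {1..n-r}"
      then show "n+r+(n-r+1-u) \<in> ?Zc" using rn by auto
    next
      fix k assume k: "k \<in> ?Z"
      have "(\<Sum>u=1..n-r. Var (n-r+(k-(n-r))) (n+r+(n-r+1-u)) * Var (n-r+?b) u) - Var (n-r+(k-(n-r))) (n-r+(2*r+1-?b)) \<in> G"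
      proof (rule subsetD[OF GA], rule A_gen)
        show "1 \<le> k-(n-r)" "k-(n-r) \<le> 2*r" "1 \<le> ?b" "?b \<le> 2*r" using True k rn by auto
      qed
      moreover have "n-r+(k-(n-r)) = k" "n-r+(2*r+1-?b) = j" using True k rn by auto
      ultimately have "(\<Sum>u=1..n-r. Var k (n+r+(n-r+1-u)) * Var (n-r+?b) u) - Var k j \<in> G" by simp
      from ig_uminus[OF ig_gen[OF this]]
      have "(Var k j :: 'a mpoly) - (\<Sum>u\<in>{1..n-r}. Var (n-r+?b) u * Var k (n+r+(n-r+1-u))) \<in> ideal_gen G"
        by (simp add: mult.commute)
      then show "(Var k j :: 'a mpoly) - (\<Sum>u\<in>{1..n-r}. (\<lambda>u. Var (n-r+?b) u) u * Var k ((\<lambda>u. n+r+(n-r+1-u)) u)) \<in> ideal_gen G"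
        by simp
    qed
  next
    case False
    show ?thesis
      by (rule exI[where x="{j}"], rule exI[where x="\<lambda>_. 1"], rule exI[where x=id]) (use j False in \<open>auto simp: ig_zero\<close>)
  qed
  have mid: "(Var k j :: 'a mpoly) * Var k' s - Var k s * Var k' j \<in> ideal_gen G"
    if kk: "k \<in> ?Z" "k' \<in> ?Z" "1 \<le> j" "j \<le> 2 * n" "1 \<le> s" "s \<le> 2 * n" for k k' j s
  proof -
    obtain U \<beta> \<sigma> where U: "finite (U::nat set)" "\<forall>u\<in>U. \<sigma> u \<in> ?Zc"
      "\<forall>k\<in>?Z. (Var k j :: 'a mpoly) - (\<Sum>u\<in>U. \<beta> u * Var k (\<sigma> u)) \<in> ideal_gen G"
      using col[OF kk(3,4)] by (elim exE conjE) blast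
    obtain U' \<beta>' \<sigma>' where U': "finite (U'::nat set)" "\<forall>u\<in>U'. \<sigma>' u \<in> ?Zc"
      "\<forall>k\<in>?Z. (Var k s :: 'a mpoly) - (\<Sum>u\<in>U'. \<beta>' u * Var k (\<sigma>' u)) \<in> ideal_gen G"
      using col[OF kk(5,6)] by (elim exE conjE) blast
    have "(\<lambda>x y. Var y x :: 'a mpoly) j k * (\<lambda>x y. Var y x) s k' - (\<lambda>x y. Var y x) j k' * (\<lambda>x y. Var y x) s k \<in> ideal_gen G"
    proof (rule comb[where f="\<lambda>x y. (Var y x :: 'a mpoly)" and i=j and i'=s and j=k and s=k' and T=U and T'=U' and \<alpha>=\<beta> and \<rho>=\<sigma> and \<alpha>'=\<beta>' and \<rho>'=\<sigma>'])
      fix u u' assume "u \<in> U" "u' \<in> U'"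
      then have "Var k (\<sigma> u) * Var k' (\<sigma>' u') - Var k (\<sigma>' u') * Var k' (\<sigma> u) \<in> G"
        using U(2) U'(2) kk(1,2) by (intro GW) auto
      from ig_gen[OF this] show "Var k (\<sigma> u) * Var k' (\<sigma>' u') - Var k' (\<sigma> u) * Var k (\<sigma>' u') \<in> ideal_gen G"
        by (simp add: mult.commute)
    qed (fact U(1), fact U'(1), rule bspec[OF U(3) kk(1)], rule bspec[OF U(3) kk(2)], rule bspec[OF U'(3) kk(1)], rule bspec[OF U'(3) kk(2)])
    then show ?thesis by (simp add: mult.commute)
  qed
  have row: "\<exists>(T::nat set) \<alpha> \<rho>. finite T \<and> (\<forall>t\<in>T. \<rho> t \<in> ?Z) \<and>
     (\<forall>j\<in>{1..2*n}. (Var i j :: 'a mpoly) - (\<Sum>t\<in>T. \<alpha> t * Var (\<rho> t) j) \<in> ideal_gen G)"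
    if i: "1 \<le> i" "i \<le> 2 * n" for i
  proof -
    consider (z) "i \<in> ?Z" | (top) "i \<le> n - r" | (bot) "n + r < i" using i by fastforce
    then show ?thesis
    proof cases
      case z
      show ?thesis
        by (rule exI[where x="{i}"], rule exI[where x="\<lambda>_. 1"], rule exI[where x=id]) (use z in \<open>auto simp: ig_zero\<close>)
    next
      case top
      let ?W = "mmul (n-r) (antiJ (n-r)) (mtrans (block (Xmat::'a mpoly matf) (n-r) (n-r+2*r)))"
      show ?thesis
      proof (rule exI[where x="{1..2*r}"], rule exI, rule exI[where x="\<lambda>t. n-r+(2*r+1-t)"], intro conjI ballI)
        show "finite {1..2*r}" by simp
        fix t assume "t \<in> {1..2*r}"
        then show "n-r+(2*r+1-t) \<in> ?Z" using rn by auto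
      next
        fix j assume j: "j \<in> {1..2*n}"
        have "Var i j + Const h * (\<Sum>t=1..2*r. ?W i t * Var (n-r+(2*r+1-t)) j) \<in> G"
          by (intro subsetD[OF GI] top_gen) (use top i j rn in auto)
        from ig_gen[OF this]
        show "Var i j - (\<Sum>t\<in>{1..2*r}. (- (Const h * ?W i t)) * Var (n-r+(2*r+1-t)) j) \<in> ideal_gen G"
          by (simp add: sum_distrib_left sum_negf mult.assoc)
      qed
    next
      case bot
      let ?a = "i - (n-r+2*r)"
      let ?W = "mmul (n-r) (antiJ (n-r)) (mtrans (block (Xmat::'a mpoly matf) (n-r) 0))"
      have ia: "n-r+2*r+?a = i" using bot rn by auto
      show ?thesis
      proof (rule exI[where x="{1..2*r}"], rule exI, rule exI[where x="\<lambda>t. n-r+(2*r+1-t)"], intro conjI ballI)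
        show "finite {1..2*r}" by simp
        fix t assume "t \<in> {1..2*r}"
        then show "n-r+(2*r+1-t) \<in> ?Z" using rn by auto
      next
        fix j assume j: "j \<in> {1..2*n}"
        have "Var (n-r+2*r+?a) j + Const h * (\<Sum>t=1..2*r. ?W ?a t * Var (n-r+(2*r+1-t)) j) \<in> G"
          by (intro subsetD[OF GI] bot_gen) (use bot i j rn in auto)
        from ig_gen[OF this]
        show "Var i j - (\<Sum>t\<in>{1..2*r}. (- (Const h * ?W ?a t)) * Var (n-r+(2*r+1-t)) j) \<in> ideal_gen G"
          unfolding ia by (simp add: sum_distrib_left sum_negf mult.assoc)
      qed
    qed
  qed
  obtain T \<alpha> \<rho> where T: "finite (T::nat set)" "\<forall>x\<in>T. \<rho> x \<in> ?Z"
     "\<forall>j\<in>{1..2*n}. (Var i j :: 'a mpoly) - (\<Sum>x\<in>T. \<alpha> x * Var (\<rho> x) j) \<in> ideal_gen G"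
    using row[OF b(1,2)] by blast
  obtain T' \<alpha>' \<rho>' where T': "finite (T'::nat set)" "\<forall>x\<in>T'. \<rho>' x \<in> ?Z"
     "\<forall>j\<in>{1..2*n}. (Var t j :: 'a mpoly) - (\<Sum>x\<in>T'. \<alpha>' x * Var (\<rho>' x) j) \<in> ideal_gen G"
    using row[OF b(3,4)] by blast
  show ?thesis
  proof (rule comb[where f=Var and i=i and i'=t and j=j and s=s and T=T and T'=T' and \<alpha>=\<alpha> and \<rho>=\<rho> and \<alpha>'=\<alpha>' and \<rho>'=\<rho>'])
    fix x y assume "x \<in> T" "y \<in> T'"
    then show "Var (\<rho> x) j * Var (\<rho>' y) s - Var (\<rho> x) s * Var (\<rho>' y) j \<in> ideal_gen G"
      using T T' b by (intro mid) auto
  qed (use T T' b in auto)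
qed

theorem lemma4p9:
  fixes n r :: nat and \<pi> h :: "'a::{idom, ring_char_0}"
  assumes "n \<ge> 3" and "1 \<le> r" and "r \<le> n - 1"
    and "2 * h = 1"
    and "\<pi> \<noteq> 0" and "\<not> \<pi> dvd 1"
    and "1 \<le> i" "i \<le> 2 * n" "1 \<le> t" "t \<le> 2 * n"
    and "1 \<le> j" "j \<le> 2 * n" "1 \<le> s" "s \<le> 2 * n"
  shows "(Var i j * Var t s - Var i s * Var t j :: 'a mpoly) \<in>
    ideal_gen (Iprime_gens n r h
      \<union> {Var i' j' * Var t' s' - Var i' s' * Var t' j' | i' t' j' s'.
           i' \<in> {n - r + 1..n + r} \<and> t' \<in> {n - r + 1..n + r}
         \<and> j' \<in> {1..2 * n} - {n - r + 1..n + r} \<and> s' \<in> {1..2 * n} - {n - r + 1..n + r}}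
      \<union> {mtrace (block Xmat (n - r) (n - r)) (2 * r) + Const (2 * \<pi>)}
      \<union> entries (msub (mmul (n - r) (mmul (n - r) (block Xmat (n - r) (n + r)) (antiJ (n - r)))
                              (mtrans (block Xmat (n - r) 0)))
                        (mmul (2 * r) (block Xmat (n - r) (n - r)) (antiJ (2 * r))))
                 (2 * r) (2 * r))"
proof (rule main_gen[where n=n and r=r and h=h])
  show "r \<le> n" using assms by linarith
qed (use assms in blast)+

end
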